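(* Let $F$ be a positive integer and $S$ an irreducible numerical semigroup with Frobenius number $F$. Define $S_0=S$ and, for $n\ge 0$, $S_{n+1}=(S_n\setminus\{\mathrm{m}(S_n)\})\cup\{F-\mathrm{m}(S_n)\}$ if $\mathrm{m}(S_n)<\frac{F}{2}$, and $S_{n+1}=S_n$ otherwise. Then every $S_n$ is an irreducible numerical semigroup with Frobenius number $F$, and if $k=\#\{s\in S: s<\frac{F}{2}\}-1$, then $S_{k+n}=\mathrm{C}(F)$ for all $n\in\mathbb{N}$.
   Context: A numerical semigroup is a subset $S\subseteq\mathbb{N}$ (with $\mathbb{N}$ the set of nonnegative integers) closed under addition, containing $0$, with $\mathbb{N}\setminus S$ finite. Its Frobenius number is the largest integer not in $S$; its multiplicity $\mathrm{m}(S)$ is the smallest positive integer in $S$. A numerical semigroup is irreducible if it cannot be expressed as the intersection of two numerical semigroups properly containing it. For a positive integer $F$, $\mathrm{C}(F)=\{0\}\cup\{z\in\mathbb{Z}: z\ge \lceil\frac{F+1}{2}\rceil\}\setminus\{F\}$ (i.e. $\{0\}\cup\{z\ge\frac{F+1}{2}\}\setminus\{F\}$ for $F$ odd and $\{0\}\cup\{z\ge \frac F2+1\}\setminus\{F\}$ for $F$ even). *)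

theory Defs
  imports Main
begin

definition numerical_semigroup :: "nat set \<Rightarrow> bool" where
  "numerical_semigroup S \<longleftrightarrow>
     0 \<in> S \<and> (\<forall>x\<in>S. \<forall>y\<in>S. x + y \<in> S) \<and> finite (UNIV - S)"

text \<open>Frobenius number: the largest natural number not in S (used only when
  UNIV - S is nonempty).\<close>
definition frobenius :: "nat set \<Rightarrow> nat" where
  "frobenius S = Max (UNIV - S)"

definition multiplicity :: "nat set \<Rightarrow> nat" where
  "multiplicity S = (LEAST x. x \<in> S \<and> 0 < x)"

definition irreducible_ns :: "nat set \<Rightarrow> bool" where
  "irreducible_ns S \<longleftrightarrow> numerical_semigroup S \<and>
     \<not> (\<exists>S1 S2. numerical_semigroup S1 \<and> numerical_semigroup S2 \<and>
            S \<subset> S1 \<and> S \<subset> S2 \<and> S = S1 \<inter> S2)"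

text \<open>C(F) = {0} \<union> {z. z \<ge> ceil((F+1)/2)} - {F}.  For natural z,
  z \<ge> (F+1)/2 iff 2*z \<ge> F+1.\<close>
definition C_set :: "nat \<Rightarrow> nat set" where
  "C_set F = ({0} \<union> {z. F + 1 \<le> 2 * z}) - {F}"

primrec seqS :: "nat \<Rightarrow> nat set \<Rightarrow> nat \<Rightarrow> nat set" where
  "seqS F S 0 = S"
| "seqS F S (Suc n) =
     (if 2 * multiplicity (seqS F S n) < F
      then (seqS F S n - {multiplicity (seqS F S n)}) \<union> {F - multiplicity (seqS F S n)}
      else seqS F S n)"

end

theory Submission
  imports Defs
begin

definition invF :: "nat \<Rightarrow> nat set \<Rightarrow> bool" where
  "invF F S \<longleftrightarrow> numerical_semigroup S \<and> F \<notin> S \<and> (\<forall>x>F. x \<in> S)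
     \<and> (\<forall>x. x \<notin> S \<and> x \<noteq> F \<and> 2*x \<noteq> F \<longrightarrow> F - x \<in> S)"

lemma inv_le: "invF F S \<Longrightarrow> x \<notin> S \<Longrightarrow> x \<le> F"
  unfolding invF_def using leI by blast

lemma mult_props:
  assumes "x \<in> S" "0 < x"
  shows "multiplicity S \<in> S \<and> 0 < multiplicity S \<and> multiplicity S \<le> x"
proof -
  have "multiplicity S \<in> S \<and> 0 < multiplicity S"
    unfolding multiplicity_def by (rule LeastI[of _ x]) (use assms in auto)
  moreover have "multiplicity S \<le> x"
    unfolding multiplicity_def by (rule Least_le) (use assms in auto)
  ultimately show ?thesis by auto
qed

lemma inv_frob: assumes "invF F S" shows "frobenius S = F"
proof -
  have fin: "finite (UNIV - S)" using assms by (auto simp: invF_def numerical_semigroup_def)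
  show ?thesis unfolding frobenius_def
    by (rule Max_eqI[OF fin]) (use assms inv_le[OF assms] in \<open>auto simp: invF_def\<close>)
qed

lemma special_gap:
  assumes "numerical_semigroup S" "numerical_semigroup T" "S \<subset> T"
  shows "\<exists>g. g \<in> T - S \<and> g + g \<in> S \<and> (\<forall>s\<in>S. 0 < s \<longrightarrow> g + s \<in> S)"
proof -
  have fin: "finite (T - S)" using assms(1)
    by (auto simp: numerical_semigroup_def intro: finite_subset[of _ "UNIV - S"])
  have ne: "T - S \<noteq> {}" using assms(3) by auto
  define g where "g = Max (T - S)"
  have g: "g \<in> T - S" using Max_in[OF fin ne] g_def by auto
  have gmax: "\<And>y. y \<in> T - S \<Longrightarrow> y \<le> g" using Max_ge[OF fin] g_def by auto
  have g0: "0 < g" using g assms(1) by (auto simp: numerical_semigroup_def intro: Nat.gr0I)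
  have "g + g \<in> T" using g assms(2) by (auto simp: numerical_semigroup_def)
  hence "g + g \<in> S" using gmax[of "g+g"] g0 by (cases "g+g \<in> S") auto
  moreover have "\<forall>s\<in>S. 0 < s \<longrightarrow> g + s \<in> S"
  proof (intro ballI impI)
    fix s assume s: "s \<in> S" "0 < s"
    have "g + s \<in> T" using g s assms by (auto simp: numerical_semigroup_def)
    thus "g + s \<in> S" using gmax[of "g+s"] s by (cases "g+s \<in> S") auto
  qed
  ultimately show ?thesis using g by blast
qed

lemma inv_irred: assumes "invF F S" shows "irreducible_ns S"
proof -
  have ns: "numerical_semigroup S" using assms by (simp add: invF_def)
  have sp: "g = F" if "g \<notin> S" "g + g \<in> S" "\<forall>s\<in>S. 0 < s \<longrightarrow> g + s \<in> S" for g
  proof (rule ccontr)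
    assume "g \<noteq> F"
    have "2*g \<noteq> F" using that(2) assms by (auto simp: invF_def mult_2)
    hence "F - g \<in> S" using that(1) \<open>g \<noteq> F\<close> assms by (auto simp: invF_def)
    have "g < F" using inv_le[OF assms that(1)] \<open>g \<noteq> F\<close> by simp
    hence "g + (F - g) \<in> S" using that(3) \<open>F - g \<in> S\<close> by auto
    thus False using \<open>g < F\<close> assms by (auto simp: invF_def)
  qed
  show ?thesis unfolding irreducible_ns_def
  proof (intro conjI notI ns)
    assume "\<exists>S1 S2. numerical_semigroup S1 \<and> numerical_semigroup S2 \<and> S \<subset> S1 \<and> S \<subset> S2 \<and> S = S1 \<inter> S2"
    then obtain S1 S2 where h: "numerical_semigroup S1" "numerical_semigroup S2" "S \<subset> S1" "S \<subset> S2" "S = S1 \<inter> S2"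
      by blast
    obtain g1 where g1: "g1 \<in> S1 - S" "g1 + g1 \<in> S" "\<forall>s\<in>S. 0 < s \<longrightarrow> g1 + s \<in> S"
      using special_gap[OF ns h(1) h(3)] by blast
    obtain g2 where g2: "g2 \<in> S2 - S" "g2 + g2 \<in> S" "\<forall>s\<in>S. 0 < s \<longrightarrow> g2 + s \<in> S"
      using special_gap[OF ns h(2) h(4)] by blast
    have "g1 = F" using sp g1 by blast
    moreover have "g2 = F" using sp g2 by blast
    ultimately show False using g1 g2 h(5) by auto
  qed
qed

lemma add_gap_ns:
  assumes "numerical_semigroup S" "g + g \<in> S" "\<forall>s\<in>S. 0 < s \<longrightarrow> g + s \<in> S"
  shows "numerical_semigroup (S \<union> {g})"
proof -
  have "\<forall>x\<in>S \<union> {g}. \<forall>y\<in>S \<union> {g}. x + y \<in> S \<union> {g}"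
  proof (intro ballI)
    fix x y assume "x \<in> S \<union> {g}" "y \<in> S \<union> {g}"
    thus "x + y \<in> S \<union> {g}" using assms
      by (cases "x = 0"; cases "y = 0") (auto simp: numerical_semigroup_def add.commute)
  qed
  moreover have "finite (UNIV - (S \<union> {g}))" using assms(1)
    by (auto simp: numerical_semigroup_def intro: finite_subset[of _ "UNIV - S"])
  ultimately show ?thesis using assms(1) by (auto simp: numerical_semigroup_def)
qed

lemma irred_inv:
  assumes irr: "irreducible_ns S" and FS: "F \<notin> S" and fr: "frobenius S = F"
  shows "invF F S"
proof -
  have ns: "numerical_semigroup S" using irr by (simp add: irreducible_ns_def)
  have fin: "finite (UNIV - S)" using ns by (simp add: numerical_semigroup_def)
  have le: "x \<le> F" if "x \<notin> S" for x
    using Max_ge[OF fin, of x] that fr by (auto simp: frobenius_def)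
  have gt: "\<forall>x>F. x \<in> S" using le leD by blast
  have S0: "0 \<in> S" using ns by (simp add: numerical_semigroup_def)
  have F0: "0 < F" using FS S0 by (auto intro: Nat.gr0I)
  have ch: "\<forall>x. x \<notin> S \<and> x \<noteq> F \<and> 2*x \<noteq> F \<longrightarrow> F - x \<in> S"
  proof (rule ccontr)
    assume na: "\<not> ?thesis"
    define A where "A = {h. h \<notin> S \<and> h \<noteq> F \<and> 2*h \<noteq> F \<and> F - h \<notin> S}"
    have ne: "A \<noteq> {}" using na by (auto simp: A_def)
    have finA: "finite A" by (rule finite_subset[OF _ fin]) (auto simp: A_def)
    define h where "h = Max A"
    have hA: "h \<in> A" using Max_in[OF finA ne] h_def by simp
    have hmax: "\<And>y. y \<in> A \<Longrightarrow> y \<le> h" using Max_ge[OF finA] h_def by simp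
    have hF: "h < F" using hA le by (auto simp: A_def le_less)
    have h0: "h \<noteq> 0" proof assume "h = 0" thus False using hA S0 by (simp add: A_def) qed
    have "F - h \<in> A" using hA hF h0 by (auto simp: A_def)
    hence "F - h \<le> h" by (rule hmax)
    hence h2: "F < 2*h" using hA by (auto simp: A_def)
    have hh: "h + h \<in> S" using gt h2 by auto
    have hs: "\<forall>s\<in>S. 0 < s \<longrightarrow> h + s \<in> S"
    proof (intro ballI impI; rule ccontr)
      fix s assume s: "s \<in> S" "0 < s" "h + s \<notin> S"
      have "h + s \<noteq> F" using s hA by (auto simp: A_def)
      moreover have "2*(h+s) \<noteq> F" using h2 by auto
      moreover have "F - (h + s) \<notin> S"
      proof
        assume "F - (h + s) \<in> S"
        hence "F - (h+s) + s \<in> S" using s ns by (auto simp: numerical_semigroup_def)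
        moreover have "F - (h+s) + s = F - h" using le[OF s(3)] by auto
        ultimately show False using hA by (auto simp: A_def)
      qed
      ultimately have "h + s \<in> A" using s by (auto simp: A_def)
      thus False using hmax[of "h+s"] s by auto
    qed
    have FF: "F + F \<in> S" using gt F0 by auto
    have Fs: "\<forall>s\<in>S. 0 < s \<longrightarrow> F + s \<in> S" using gt by auto
    have n1: "numerical_semigroup (S \<union> {h})" by (rule add_gap_ns[OF ns hh hs])
    have n2: "numerical_semigroup (S \<union> {F})" by (rule add_gap_ns[OF ns FF Fs])
    have "S = (S \<union> {h}) \<inter> (S \<union> {F})" using hF by auto
    moreover have "S \<subset> S \<union> {h}" using hA by (auto simp: A_def)
    moreover have "S \<subset> S \<union> {F}" using FS by auto
    ultimately show False using irr n1 n2 unfolding irreducible_ns_def by blast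
  qed
  show ?thesis using ns FS gt ch by (simp add: invF_def)
qed

lemma step_inv:
  assumes I: "invF F S" and m: "m = multiplicity S" and lt: "2*m < F"
  shows "invF F ((S - {m}) \<union> {F - m})"
    and "{t \<in> (S - {m}) \<union> {F - m}. 2*t < F} = {s \<in> S. 2*s < F} - {m}"
    and "m \<in> S" "0 < m"
proof -
  have ns: "numerical_semigroup S" using I by (simp add: invF_def)
  have gt: "\<forall>x>F. x \<in> S" using I by (simp add: invF_def)
  have FS: "F \<notin> S" using I by (simp add: invF_def)
  have mp: "m \<in> S \<and> 0 < m" using mult_props[of "F+1" S] gt m by auto
  have mle: "\<And>s. s \<in> S \<Longrightarrow> 0 < s \<Longrightarrow> m \<le> s" using mult_props m by blast
  show "m \<in> S" "0 < m" using mp by auto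
  have S0: "0 \<in> S" using ns by (simp add: numerical_semigroup_def)
  have add: "\<And>x y. x \<in> S \<Longrightarrow> y \<in> S \<Longrightarrow> x + y \<in> S" using ns by (simp add: numerical_semigroup_def)
  let ?T = "(S - {m}) \<union> {F - m}"
  have FmS: "F - m \<notin> S"
  proof
    assume "F - m \<in> S" hence "F - m + m \<in> S" using add mp by auto
    thus False using lt FS by auto
  qed
  have closed: "\<forall>x\<in>?T. \<forall>y\<in>?T. x + y \<in> ?T"
  proof (intro ballI)
    fix x y assume x: "x \<in> ?T" and y: "y \<in> ?T"
    have c1: "a + b \<in> ?T" if "a \<in> S - {m}" "b \<in> S - {m}" for a b
    proof -
      have "a + b \<noteq> m"
      proof
        assume e: "a + b = m"
        show False
        proof (cases "a = 0")
          case True thus False using e that by auto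
        next
          case False
          hence "b \<noteq> 0" using e that by auto
          thus False using mle[of a] mle[of b] e that False by auto
        qed
      qed
      thus ?thesis using add that by auto
    qed
    have c2: "a + (F - m) \<in> ?T" if "a \<in> S - {m}" for a
    proof (cases "a = 0")
      case True thus ?thesis by auto
    next
      case False
      hence "m < a" using mle[of a] that by force
      hence "a + (F - m) > F" using lt by auto
      thus ?thesis using gt lt by auto
    qed
    have c3: "(F - m) + (F - m) \<in> ?T" using gt lt by auto
    show "x + y \<in> ?T"
      using x y c1 c2[of x] c2[of y] c3 by (auto simp: add.commute)
  qed
  have finT: "finite (UNIV - ?T)"
    using ns by (auto simp: numerical_semigroup_def intro: finite_subset[of _ "insert m (UNIV - S)"])
  have nsT: "numerical_semigroup ?T" using closed finT S0 mp
    by (auto simp: numerical_semigroup_def)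
  have FT: "F \<notin> ?T" using FS mp lt by auto
  have gtT: "\<forall>x>F. x \<in> ?T" using gt lt by auto
  have chT: "\<forall>x. x \<notin> ?T \<and> x \<noteq> F \<and> 2*x \<noteq> F \<longrightarrow> F - x \<in> ?T"
  proof (intro allI impI)
    fix x assume h: "x \<notin> ?T \<and> x \<noteq> F \<and> 2*x \<noteq> F"
    show "F - x \<in> ?T"
    proof (cases "x = m")
      case True thus ?thesis by auto
    next
      case False
      hence xS: "x \<notin> S" and xn: "x \<noteq> F - m" using h by auto
      have "F - x \<in> S" using I xS h by (simp add: invF_def)
      moreover have "x \<le> F" using inv_le[OF I xS] .
      hence "F - x \<noteq> m" using xn by auto
      ultimately show ?thesis by auto
    qed
  qed
  show "invF F ?T" using nsT FT gtT chT by (simp add: invF_def)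
  show "{t \<in> ?T. 2*t < F} = {s \<in> S. 2*s < F} - {m}" using lt by auto
qed

lemma final:
  assumes I: "invF F S" and c: "{s \<in> S. 2*s < F} = {0}"
  shows "S = C_set F"
proof -
  have c': "\<And>s. s \<in> S \<Longrightarrow> 2*s < F \<Longrightarrow> s = 0"
  proof -
    fix s assume "s \<in> S" "2*s < F"
    hence "s \<in> {s \<in> S. 2*s < F}" by simp
    thus "s = 0" unfolding c by simp
  qed
  have FS: "F \<notin> S" and ns: "numerical_semigroup S" using I by (simp_all add: invF_def)
  have S0: "0 \<in> S" using ns by (simp add: numerical_semigroup_def)
  have ad: "\<And>x y. x \<in> S \<Longrightarrow> y \<in> S \<Longrightarrow> x + y \<in> S" using ns by (simp add: numerical_semigroup_def)
  have ch: "\<And>x. x \<notin> S \<Longrightarrow> x \<noteq> F \<Longrightarrow> 2*x \<noteq> F \<Longrightarrow> F - x \<in> S"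
    using I by (simp add: invF_def)
  show ?thesis
  proof (rule set_eqI)
    fix z
    show "z \<in> S \<longleftrightarrow> z \<in> C_set F"
    proof
      assume z: "z \<in> S"
      have zF: "z \<noteq> F" using z FS by blast
      have "z = 0 \<or> F + 1 \<le> 2*z"
      proof (rule ccontr)
        assume "\<not> (z = 0 \<or> F + 1 \<le> 2*z)"
        hence a: "z \<noteq> 0" "2*z \<le> F" by auto
        have "2*z \<noteq> F"
        proof
          assume "2*z = F" hence "z + z = F" by simp
          thus False using ad[OF z z] FS by simp
        qed
        hence "2*z < F" using a by simp
        thus False using c'[OF z] a by simp
      qed
      thus "z \<in> C_set F" using zF unfolding C_set_def by auto
    next
      assume z: "z \<in> C_set F"
      show "z \<in> S"
      proof (cases "z = 0")
        case True thus ?thesis using S0 by simp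
      next
        case False
        hence z2: "F + 1 \<le> 2*z" "z \<noteq> F" using z unfolding C_set_def by auto
        show ?thesis
        proof (rule ccontr)
          assume zS: "z \<notin> S"
          have "2*z \<noteq> F" using z2 by simp
          hence Fz: "F - z \<in> S" using ch[OF zS z2(2)] by simp
          have "z \<le> F" using inv_le[OF I zS] .
          hence "z < F" using z2 by simp
          hence "2*(F - z) < F" "F - z \<noteq> 0" using z2 by auto
          thus False using c'[OF Fz] by simp
        qed
      qed
    qed
  qed
qed

theorem mainTheorem4:
  fixes F :: nat and S :: "nat set"
  assumes "0 < F"
    and "irreducible_ns S"
    and "F \<notin> S" and "frobenius S = F"
  defines "k \<equiv> card {s \<in> S. 2 * s < F} - 1"
  shows "(\<forall>n. irreducible_ns (seqS F S n) \<and> F \<notin> seqS F S n \<and> frobenius (seqS F S n) = F)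
       \<and> (\<forall>n. seqS F S (k + n) = C_set F)"
proof -
  have I0: "invF F S" using irred_inv assms by blast
  have Iall: "invF F (seqS F S n)" for n
  proof (induction n)
    case 0 thus ?case using I0 by simp
  next
    case (Suc n) thus ?case using step_inv(1)[OF Suc refl] by simp
  qed
  define c where "c n = card {s \<in> seqS F S n. 2*s < F}" for n
  have fc: "finite {s \<in> X. 2*s < F}" for X :: "nat set"
    by (rule finite_subset[of _ "{..<F}"]) auto
  have z: "0 \<in> {s \<in> seqS F S n. 2*s < F}" for n
  proof -
    have "numerical_semigroup (seqS F S n)" using Iall[of n] unfolding invF_def by blast
    hence "0 \<in> seqS F S n" unfolding numerical_semigroup_def by blast
    thus ?thesis using assms(1) by simp
  qed
  have c1: "1 \<le> c n" for n
  proof -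
    have "card {0::nat} \<le> card {s \<in> seqS F S n. 2*s < F}"
      by (rule card_mono[OF fc]) (use z in blast)
    thus ?thesis unfolding c_def by simp
  qed
  have k: "k = c 0 - 1" by (simp add: k_def c_def)
  have cn: "n \<le> k \<Longrightarrow> c n = c 0 - n" for n
  proof (induction n)
    case 0 thus ?case by simp
  next
    case (Suc n)
    hence cn: "c n = c 0 - n" "2 \<le> c n" using k by auto
    have "\<exists>s \<in> {s \<in> seqS F S n. 2*s < F}. s \<noteq> 0"
    proof (rule ccontr)
      assume "\<not> ?thesis"
      hence "{s \<in> seqS F S n. 2*s < F} \<subseteq> {0}" by auto
      hence "card {s \<in> seqS F S n. 2*s < F} \<le> card {0::nat}" by (rule card_mono[rotated]) simp
      hence "c n \<le> 1" unfolding c_def by simp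
      thus False using cn by simp
    qed
    then obtain s where s: "s \<in> seqS F S n" "2*s < F" "0 < s" by auto
    let ?m = "multiplicity (seqS F S n)"
    have "?m \<le> s" using mult_props[OF s(1) s(3)] by simp
    hence lt: "2 * ?m < F" using s by simp
    note st = step_inv[OF Iall[of n] refl lt]
    have "c (Suc n) = card ({s \<in> seqS F S n. 2*s < F} - {?m})"
      unfolding c_def using lt st(2) by simp
    also have "\<dots> = c n - 1" unfolding c_def using st(3) lt fc by (simp add: card_Diff_singleton)
    finally show ?case using cn by simp
  qed
  have ck: "c k = 1" using cn[of k] k c1[of 0] by simp
  have one: "{s \<in> seqS F S n. 2*s < F} = {0}" if "c n = 1" for n
  proof -
    have "card {s \<in> seqS F S n. 2*s < F} = 1" using that unfolding c_def .
    then obtain a where "{s \<in> seqS F S n. 2*s < F} = {a}" by (rule card_1_singletonE)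
    thus ?thesis using z[of n] by auto
  qed
  have fix1: "seqS F S (Suc n) = seqS F S n" if "c n = 1" for n
  proof -
    let ?m = "multiplicity (seqS F S n)"
    have "\<not> 2 * ?m < F"
    proof
      assume lt: "2 * ?m < F"
      have "?m \<in> seqS F S n" "0 < ?m" using step_inv(3,4)[OF Iall[of n] refl lt] by auto
      hence "?m \<in> {s \<in> seqS F S n. 2*s < F}" using lt by simp
      hence "?m \<in> {0}" unfolding one[OF that] .
      thus False using \<open>0 < ?m\<close> by simp
    qed
    thus ?thesis unfolding seqS.simps(2) by (rule if_not_P)
  qed
  have stay: "seqS F S (k + n) = seqS F S k \<and> c (k + n) = 1" for n
  proof (induction n)
    case 0 thus ?case using ck by simp
  next
    case (Suc n)
    hence "seqS F S (Suc (k + n)) = seqS F S (k+n)" using fix1 by blast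
    hence e1: "seqS F S (k + Suc n) = seqS F S (k+n)" by (simp only: add_Suc_right)
    have "c (k + Suc n) = c (k + n)" by (simp only: c_def e1)
    thus ?case using Suc e1 by (simp del: seqS.simps)
  qed
  have "seqS F S k = C_set F" using final[OF Iall[of k] one[OF ck]] .
  hence A: "\<forall>n. seqS F S (k + n) = C_set F" using stay by simp
  have B: "\<forall>n. irreducible_ns (seqS F S n) \<and> F \<notin> seqS F S n \<and> frobenius (seqS F S n) = F"
  proof
    fix n
    have "F \<notin> seqS F S n" using Iall[of n] unfolding invF_def by blast
    thus "irreducible_ns (seqS F S n) \<and> F \<notin> seqS F S n \<and> frobenius (seqS F S n) = F"
      using inv_irred[OF Iall[of n]] inv_frob[OF Iall[of n]] by blast
  qed
  show ?thesis using A B by blast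
qed

end
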